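(* For any graph $G$, $\gamma_{oidR}(G)\le 2\gamma_{oiR}(G)$, with equality if and only if $G=\overline{K_n}$ (the edgeless graph on $n$ vertices).
   Context: Graphs are finite and simple. A DRD function of $G$ is $f:V(G)\to\{0,1,2,3\}$ such that every vertex with value $0$ has a neighbor with value $3$ or two neighbors with value $2$, and every vertex with value $1$ has a neighbor with value at least $2$; it is an OIDRD function if the set of vertices with value $0$ is independent, and $\gamma_{oidR}(G)$ is the minimum weight $\sum_v f(v)$ of an OIDRD function. A Roman dominating function is $f:V(G)\to\{0,1,2\}$ such that every vertex with value $0$ has a neighbor with value $2$; it is an outer independent Roman dominating function (OIRD function) if the set of vertices with value $0$ is independent, and $\gamma_{oiR}(G)$ is the minimum weight of an OIRD function. *)

theory Defs
  imports Main
begin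

definition simple_graph :: "'a set \<Rightarrow> ('a \<Rightarrow> 'a \<Rightarrow> bool) \<Rightarrow> bool" where
  "simple_graph V E \<longleftrightarrow> finite V \<and> (\<forall>u v. E u v \<longrightarrow> u \<in> V \<and> v \<in> V)
     \<and> (\<forall>u v. E u v \<longrightarrow> E v u) \<and> (\<forall>v. \<not> E v v)"

definition drd :: "'a set \<Rightarrow> ('a \<Rightarrow> 'a \<Rightarrow> bool) \<Rightarrow> ('a \<Rightarrow> nat) \<Rightarrow> bool" where
  "drd V E f \<longleftrightarrow> (\<forall>v\<in>V. f v \<le> 3
     \<and> (f v = 0 \<longrightarrow> (\<exists>u\<in>V. E v u \<and> f u = 3)
                   \<or> (\<exists>u\<in>V. \<exists>w\<in>V. u \<noteq> w \<and> E v u \<and> E v w \<and> f u = 2 \<and> f w = 2))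
     \<and> (f v = 1 \<longrightarrow> (\<exists>u\<in>V. E v u \<and> f u \<ge> 2)))"

definition zeros_independent :: "'a set \<Rightarrow> ('a \<Rightarrow> 'a \<Rightarrow> bool) \<Rightarrow> ('a \<Rightarrow> nat) \<Rightarrow> bool" where
  "zeros_independent V E f \<longleftrightarrow> (\<forall>u\<in>V. \<forall>w\<in>V. f u = 0 \<and> f w = 0 \<longrightarrow> \<not> E u w)"

definition oidrd :: "'a set \<Rightarrow> ('a \<Rightarrow> 'a \<Rightarrow> bool) \<Rightarrow> ('a \<Rightarrow> nat) \<Rightarrow> bool" where
  "oidrd V E f \<longleftrightarrow> drd V E f \<and> zeros_independent V E f"

definition rdf :: "'a set \<Rightarrow> ('a \<Rightarrow> 'a \<Rightarrow> bool) \<Rightarrow> ('a \<Rightarrow> nat) \<Rightarrow> bool" where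
  "rdf V E f \<longleftrightarrow> (\<forall>v\<in>V. f v \<le> 2 \<and> (f v = 0 \<longrightarrow> (\<exists>u\<in>V. E v u \<and> f u = 2)))"

definition oird :: "'a set \<Rightarrow> ('a \<Rightarrow> 'a \<Rightarrow> bool) \<Rightarrow> ('a \<Rightarrow> nat) \<Rightarrow> bool" where
  "oird V E f \<longleftrightarrow> rdf V E f \<and> zeros_independent V E f"

definition gamma_oidR :: "'a set \<Rightarrow> ('a \<Rightarrow> 'a \<Rightarrow> bool) \<Rightarrow> nat" where
  "gamma_oidR V E = (LEAST k. \<exists>f. oidrd V E f \<and> sum f V = k)"

definition gamma_oiR :: "'a set \<Rightarrow> ('a \<Rightarrow> 'a \<Rightarrow> bool) \<Rightarrow> nat" where
  "gamma_oiR V E = (LEAST k. \<exists>f. oird V E f \<and> sum f V = k)"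

end

theory Submission
  imports Defs
begin

lemma oird_two: "oird V E (\<lambda>_. 2)"
  unfolding oird_def rdf_def zeros_independent_def by auto

lemma ex_oiR: "\<exists>f. oird V E f \<and> sum f V = gamma_oiR V E"
  unfolding gamma_oiR_def by (rule LeastI_ex) (use oird_two in blast)

definition dbl :: "('a \<Rightarrow> nat) \<Rightarrow> 'a \<Rightarrow> nat" where
  "dbl f v = (if f v = 2 then 3 else 2 * f v)"

lemma dbl_oidrd:
  assumes "oird V E f" shows "oidrd V E (dbl f)"
proof -
  have r: "\<forall>v\<in>V. f v \<le> 2 \<and> (f v = 0 \<longrightarrow> (\<exists>u\<in>V. E v u \<and> f u = 2))"
    and z: "zeros_independent V E f" using assms unfolding oird_def rdf_def by auto
  have d0: "\<And>v. dbl f v = 0 \<longleftrightarrow> f v = 0" and d3: "\<And>v. f v = 2 \<Longrightarrow> dbl f v = 3"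
    and d1: "\<And>v. dbl f v \<noteq> 1" unfolding dbl_def by auto
  have le3: "\<And>v. v \<in> V \<Longrightarrow> dbl f v \<le> 3" using r unfolding dbl_def by auto
  show ?thesis unfolding oidrd_def drd_def
  proof (intro conjI ballI)
    fix v assume v: "v \<in> V"
    show "dbl f v \<le> 3" using le3[OF v] .
    show "dbl f v = 0 \<longrightarrow> (\<exists>u\<in>V. E v u \<and> dbl f u = 3) \<or> (\<exists>u\<in>V. \<exists>w\<in>V. u \<noteq> w \<and> E v u \<and> E v w \<and> dbl f u = 2 \<and> dbl f w = 2)"
      using r v d0 d3 by blast
    show "dbl f v = 1 \<longrightarrow> (\<exists>u\<in>V. E v u \<and> 2 \<le> dbl f u)" using d1 by blast
  next
    show "zeros_independent V E (dbl f)" using z d0 unfolding zeros_independent_def by simp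
  qed
qed

lemma dbl_le: "oird V E f \<Longrightarrow> v \<in> V \<Longrightarrow> dbl f v \<le> 2 * f v"
  unfolding dbl_def by auto

lemma oidR_le: "oidrd V E g \<Longrightarrow> gamma_oidR V E \<le> sum g V"
  unfolding gamma_oidR_def by (rule Least_le) blast

lemma ex_oidR: "\<exists>g. oidrd V E g \<and> sum g V = gamma_oidR V E"
  unfolding gamma_oidR_def by (rule LeastI_ex) (use dbl_oidrd[OF oird_two] in blast)

lemma oiR_le: "oird V E f \<Longrightarrow> gamma_oiR V E \<le> sum f V"
  unfolding gamma_oiR_def by (rule Least_le) blast

lemma strict:
  assumes "finite V" "oird V E f" "v \<in> V" "f v = 2"
  shows "gamma_oidR V E < 2 * sum f V"
proof -
  have "sum (dbl f) V < sum (\<lambda>x. 2 * f x) V"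
    by (rule sum_strict_mono_ex1) (use assms dbl_le in \<open>auto simp: dbl_def\<close>)
  then show ?thesis using oidR_le[OF dbl_oidrd[OF assms(2)]] by (simp add: sum_distrib_left[symmetric])
qed

theorem theorem3:
  fixes V :: "'a set" and E :: "'a \<Rightarrow> 'a \<Rightarrow> bool"
  assumes "simple_graph V E"
  shows "gamma_oidR V E \<le> 2 * gamma_oiR V E
    \<and> (gamma_oidR V E = 2 * gamma_oiR V E \<longleftrightarrow> (\<forall>u v. \<not> E u v))"
proof -
  have fin: "finite V" and inV: "\<And>u v. E u v \<Longrightarrow> u \<in> V \<and> v \<in> V"
    and irr: "\<And>v. \<not> E v v" and sym: "\<And>u v. E u v \<Longrightarrow> E v u"
    using assms unfolding simple_graph_def by auto
  obtain f where f: "oird V E f" "sum f V = gamma_oiR V E" using ex_oiR by blast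
  have le: "gamma_oidR V E \<le> 2 * gamma_oiR V E"
  proof -
    have "sum (dbl f) V \<le> sum (\<lambda>x. 2 * f x) V"
      by (rule sum_mono) (use f dbl_le in auto)
    then show ?thesis using oidR_le[OF dbl_oidrd[OF f(1)]] f(2) by (simp add: sum_distrib_left[symmetric])
  qed
  have eq: "gamma_oidR V E = 2 * gamma_oiR V E \<longleftrightarrow> (\<forall>u v. \<not> E u v)"
  proof
    assume "\<forall>u v. \<not> E u v"
    hence noE: "\<And>u v. \<not> E u v" by blast
    have "oird V E (\<lambda>_. 1)" unfolding oird_def rdf_def zeros_independent_def by auto
    hence a: "gamma_oiR V E \<le> card V" using oiR_le by fastforce
    obtain g where g: "oidrd V E g" "sum g V = gamma_oidR V E" using ex_oidR by blast
    have "\<And>v. v \<in> V \<Longrightarrow> 2 \<le> g v"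
    proof -
      fix v assume "v \<in> V"
      then have "g v \<noteq> 0" "g v \<noteq> 1" using g(1) noE unfolding oidrd_def drd_def by auto
      then show "2 \<le> g v" by linarith
    qed
    hence "sum (\<lambda>_. 2) V \<le> sum g V" by (rule sum_mono)
    then show "gamma_oidR V E = 2 * gamma_oiR V E" using a le g(2) by simp
  next
    assume eq: "gamma_oidR V E = 2 * gamma_oiR V E"
    show "\<forall>u v. \<not> E u v"
    proof (rule ccontr)
      assume "\<not> (\<forall>u v. \<not> E u v)"
      then obtain a b where ab: "E a b" by blast
      have aV: "a \<in> V" and bV: "b \<in> V" using inV[OF ab] by auto
      have anb: "a \<noteq> b" using ab irr by auto
      show False
      proof (cases "\<exists>v\<in>V. f v = 2")
        case True
        then obtain v where "v \<in> V" "f v = 2" by blast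
        from strict[OF fin f(1) this] f(2) eq show False by simp
      next
        case False
        have one: "\<And>v. v \<in> V \<Longrightarrow> f v = 1"
        proof -
          fix v assume "v \<in> V"
          then have "f v \<le> 2" "f v = 0 \<longrightarrow> (\<exists>u\<in>V. E v u \<and> f u = 2)"
            using f(1) unfolding oird_def rdf_def by auto
          then show "f v = 1" using False \<open>v \<in> V\<close> by (cases "f v") auto
        qed
        define f' where "f' = f(a := 2, b := 0)"
        have o': "oird V E f'"
          using f(1) ab aV bV anb inV sym irr unfolding oird_def rdf_def zeros_independent_def f'_def
          by (auto simp: one)
        have "sum f' V = f' a + sum f' (V - {a})" using fin aV by (simp add: sum.remove)
        also have "sum f' (V - {a}) = f' b + sum f' (V - {a} - {b})"
          using fin bV anb by (simp add: sum.remove)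
        also have "sum f' (V - {a} - {b}) = sum f (V - {a} - {b})"
          by (rule sum.cong) (auto simp: f'_def)
        finally have s1: "sum f' V = 2 + sum f (V - {a} - {b})" using anb by (simp add: f'_def)
        have "sum f V = f a + sum f (V - {a})" using fin aV by (simp add: sum.remove)
        also have "sum f (V - {a}) = f b + sum f (V - {a} - {b})"
          using fin bV anb by (simp add: sum.remove)
        finally have "sum f V = 2 + sum f (V - {a} - {b})" using one aV bV by simp
        with s1 have "sum f' V = sum f V" by simp
        have s2: "sum f' V = sum f V" by fact
        have "f' a = 2" using anb by (simp add: f'_def)
        from strict[OF fin o' aV this] s2 f(2) eq show False by simp
      qed
    qed
  qed
  show ?thesis using le eq by blast
qed

end
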